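(* Let $n$ be even, $1\le\eta\le n/2$, and $p\ge1$ an integer. On the fermionic Fock space on $n$ spin orbitals define $$T=\sum_{j,k=0}^{n-1}A_j^\dagger A_k,\qquad V=\sum_{x,y=0}^{\frac n2-1}N_xN_y,$$ and let $|a\rangle$ be the basis state in which modes $1,\dots,\eta-1$ and mode $n/2$ are occupied and all others empty, and $|b\rangle$ the basis state in which modes $0,1,\dots,\eta-1$ are occupied and all others empty. Set $|\psi_\eta\rangle=\frac{1}{\sqrt2}(|a\rangle+i|b\rangle)$ and $|\phi_\eta\rangle=\frac1{\sqrt2}(|a\rangle+|b\rangle)$. Writing $D_p=[V,\ldots[V,T]]$ with $p$ copies of $V$, we have $$|\langle\psi_\eta|D_p|\psi_\eta\rangle|\ (p\text{ odd}),\qquad|\langle\phi_\eta|D_p|\phi_\eta\rangle|\ (p\text{ even})\quad=2^p\eta^p+O(\eta^{p-1}),$$ with the implied constant depending only on $p$.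
   Context: Fermionic Fock space on $n$ spin orbitals (modes labeled $0,\dots,n-1$): the $2^n$-dimensional Hilbert space with orthonormal basis $|c_0,c_1,\dots,c_{n-1}\rangle$, $c_j\in\{0,1\}$, where $c_j=1$ means mode $j$ is occupied. Creation operators: $A_j^\dagger|\dots,0_j,\dots\rangle=(-1)^{\sum_{k<j}c_k}|\dots,1_j,\dots\rangle$, $A_j^\dagger|\dots,1_j,\dots\rangle=0$; annihilation operators $A_j=(A_j^\dagger)^\dagger$; $N_j=A_j^\dagger A_j$. *)

theory Defs
  imports Complex_Main
begin

text \<open>A basis state |c_0,...,c_{n-1}> is identified with
the set of occupied modes S (a subset of {..<n}); a state vector is a function
from occupation sets to complex amplitudes.\<close>

type_synonym fock = "nat set \<Rightarrow> complex"
type_synonym fock_op = "fock \<Rightarrow> fock"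

definition jw_sign :: "nat set \<Rightarrow> nat \<Rightarrow> complex" where
  "jw_sign S j = (-1) ^ card {k \<in> S. k < j}"

text \<open>Creation operator: A_j^dagger |S> = (-1)^{#occupied k<j} |S + j> if j not in S, else 0.\<close>
definition cre :: "nat \<Rightarrow> fock_op" where
  "cre j v = (\<lambda>S. if j \<in> S then jw_sign S j * v (S - {j}) else 0)"

definition ann :: "nat \<Rightarrow> fock_op" where
  "ann j v = (\<lambda>S. if j \<notin> S then jw_sign S j * v (insert j S) else 0)"

definition num :: "nat \<Rightarrow> fock_op" where
  "num j v = cre j (ann j v)"

definition op_T :: "nat \<Rightarrow> fock_op" where
  "op_T n v = (\<lambda>S. \<Sum>j<n. \<Sum>k<n. cre j (ann k v) S)"

definition op_V :: "nat \<Rightarrow> fock_op" where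
  "op_V n v = (\<lambda>S. \<Sum>x<n div 2. \<Sum>y<n div 2. num x (num y v) S)"

definition commut :: "fock_op \<Rightarrow> fock_op \<Rightarrow> fock_op" where
  "commut X Y v = (\<lambda>S. X (Y v) S - Y (X v) S)"

definition nested_comm :: "nat \<Rightarrow> nat \<Rightarrow> fock_op" where
  "nested_comm n p = (commut (op_V n) ^^ p) (op_T n)"

definition ket :: "nat set \<Rightarrow> fock" where
  "ket S = (\<lambda>T. if T = S then 1 else 0)"

definition inner_fock :: "nat \<Rightarrow> fock \<Rightarrow> fock \<Rightarrow> complex" where
  "inner_fock n u v = (\<Sum>S\<in>Pow {..<n}. cnj (u S) * v S)"

definition state_a :: "nat \<Rightarrow> nat \<Rightarrow> nat set" where
  "state_a n \<eta> = {1..<\<eta>} \<union> {n div 2}"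

definition state_b :: "nat \<Rightarrow> nat set" where
  "state_b \<eta> = {0..<\<eta>}"

definition psi :: "nat \<Rightarrow> nat \<Rightarrow> fock" where
  "psi n \<eta> = (\<lambda>S. (ket (state_a n \<eta>) S + \<i> * ket (state_b \<eta>) S) / sqrt 2)"

definition phi :: "nat \<Rightarrow> nat \<Rightarrow> fock" where
  "phi n \<eta> = (\<lambda>S. (ket (state_a n \<eta>) S + ket (state_b \<eta>) S) / sqrt 2)"

end

theory Submission
  imports Defs
begin


definition wt :: "nat \<Rightarrow> nat set \<Rightarrow> complex" where
  "wt n S = of_nat (card (S \<inter> {..<n div 2}))^2"

lemma jw_sign_sq: "jw_sign S j * jw_sign S j = 1"
  unfolding jw_sign_def by (simp add: power_mult_distrib[symmetric] flip: power_add mult_2)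

lemma jw_sign_remove: "jw_sign (S - {j}) j = jw_sign S j"
  unfolding jw_sign_def by (rule arg_cong[where f="\<lambda>A. (-1)^card A"]) auto

lemma num_eq: "num x v S = (if x \<in> S then v S else 0)"
  unfolding num_def cre_def ann_def
  using jw_sign_sq[of S x] by (auto simp: jw_sign_remove insert_absorb)

lemma sum_ind: "(\<Sum>x<(m::nat). if x \<in> S then (1::complex) else 0) = of_nat (card (S \<inter> {..<m}))"
proof -
  have "(\<Sum>x<m. if x \<in> S then (1::complex) else 0) = sum (\<lambda>_. 1) {x\<in>{..<m}. x \<in> S}"
    by (rule sum.inter_filter[symmetric]) simp
  also have "{x\<in>{..<m}. x \<in> S} = S \<inter> {..<m}" by auto
  finally show ?thesis by simp
qed

lemma op_V_eq: "op_V n v = (\<lambda>S. wt n S * v S)"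
proof
  fix S
  have "op_V n v S = (\<Sum>x<n div 2. \<Sum>y<n div 2. (if x \<in> S then 1 else 0) * ((if y \<in> S then 1 else 0) * v S))"
    unfolding op_V_def by (auto simp: num_eq intro!: sum.cong)
  also have "\<dots> = (\<Sum>x<n div 2. if x \<in> S then 1 else 0) * ((\<Sum>y<n div 2. if y \<in> S then 1 else 0) * v S)"
    by (simp add: sum_distrib_left sum_distrib_right mult.assoc mult.left_commute)
  also have "\<dots> = wt n S * v S" unfolding sum_ind wt_def by (simp add: power2_eq_square)
  finally show "op_V n v S = wt n S * v S" .
qed

lemma cre_ann_mult: "cre j (ann k (\<lambda>T. f T * v T)) S = f (insert k (S - {j})) * cre j (ann k v) S"
  unfolding cre_def ann_def by auto

lemma nested_eq: "nested_comm n p v S =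
  (\<Sum>j<n. \<Sum>k<n. (wt n S - wt n (insert k (S - {j})))^p * cre j (ann k v) S)"
proof (induction p arbitrary: v S)
  case 0
  then show ?case by (simp add: nested_comm_def op_T_def)
next
  case (Suc p)
  have "nested_comm n (Suc p) v S = wt n S * nested_comm n p v S - nested_comm n p (op_V n v) S"
    by (simp add: nested_comm_def commut_def op_V_eq)
  also have "\<dots> = (\<Sum>j<n. \<Sum>k<n. (wt n S - wt n (insert k (S - {j})))^Suc p * cre j (ann k v) S)"
    unfolding Suc.IH op_V_eq cre_ann_mult
    by (simp add: sum_distrib_left sum_subtractf[symmetric] algebra_simps)
  finally show ?case .
qed



lemma double_sum_single:
  fixes f :: "nat \<Rightarrow> nat \<Rightarrow> 'a::comm_monoid_add"
  assumes "j0 < n" "k0 < n" "\<And>j k. j < n \<Longrightarrow> k < n \<Longrightarrow> (j, k) \<noteq> (j0, k0) \<Longrightarrow> f j k = 0"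
  shows "(\<Sum>j<n. \<Sum>k<n. f j k) = f j0 k0"
proof -
  have "(\<Sum>j<n. \<Sum>k<n. f j k) = (\<Sum>j<n. if j = j0 then f j0 k0 else 0)"
  proof (rule sum.cong[OF refl])
    fix j assume j: "j \<in> {..<n}"
    show "(\<Sum>k<n. f j k) = (if j = j0 then f j0 k0 else 0)"
    proof (cases "j = j0")
      case True
      have "(\<Sum>k<n. f j k) = (\<Sum>k<n. if k = k0 then f j0 k0 else 0)"
        using assms True j by (intro sum.cong) auto
      then show ?thesis using assms True by simp
    next
      case False
      then show ?thesis using assms j by (auto intro!: sum.neutral)
    qed
  qed
  then show ?thesis using assms by simp
qed

context
  fixes n \<eta> :: nat
  assumes ev: "even n" and e1: "1 \<le> \<eta>" and e2: "2 * \<eta> \<le> n"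
begin

lemma a_b_facts:
  shows "n div 2 \<in> state_a n \<eta>" "n div 2 \<notin> state_b \<eta>" "0 \<in> state_b \<eta>" "0 \<notin> state_a n \<eta>"
    "state_a n \<eta> \<subseteq> {..<n}" "state_b \<eta> \<subseteq> {..<n}"
    "state_a n \<eta> - {n div 2} = {1..<\<eta>}" "state_b \<eta> - {0} = {1..<\<eta>}"
    "n div 2 < n" "0 < n"
  using ev e1 e2 unfolding state_a_def state_b_def by auto

lemma a_ne_b: "state_a n \<eta> \<noteq> state_b \<eta>"
  using a_b_facts(3,4) by metis

lemma wt_a: "wt n (state_a n \<eta>) = of_nat ((\<eta> - 1)^2)"
proof -
  have "state_a n \<eta> \<inter> {..<n div 2} = {1..<\<eta>}" using ev e1 e2 unfolding state_a_def by auto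
  then show ?thesis unfolding wt_def by simp
qed

lemma wt_b: "wt n (state_b \<eta>) = of_nat (\<eta>^2)"
proof -
  have "state_b \<eta> \<inter> {..<n div 2} = {0..<\<eta>}" using ev e1 e2 unfolding state_b_def by auto
  then show ?thesis unfolding wt_def by simp
qed

lemma sign_a: "jw_sign (state_a n \<eta>) (n div 2) = (-1)^(\<eta> - 1)"
proof -
  have "{k \<in> state_a n \<eta>. k < n div 2} = {1..<\<eta>}" using ev e1 e2 unfolding state_a_def by auto
  then show ?thesis unfolding jw_sign_def by simp
qed

lemma sign_b: "jw_sign {1..<\<eta>} (n div 2) = (-1)^(\<eta> - 1)"
proof -
  have "{k \<in> {1..<\<eta>}. k < n div 2} = {1..<\<eta>}" using ev e1 e2 by auto
  then show ?thesis unfolding jw_sign_def by simp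
qed

lemma sign0: "jw_sign S 0 = 1"
  unfolding jw_sign_def by simp

lemma R_a: assumes "j \<in> state_a n \<eta>" "insert k (state_a n \<eta> - {j}) = state_b \<eta>"
  shows "j = n div 2 \<and> k = 0"
proof -
  have j: "j = n div 2"
  proof (rule ccontr)
    assume "j \<noteq> n div 2"
    then have "n div 2 \<in> insert k (state_a n \<eta> - {j})" using a_b_facts by auto
    then show False using assms a_b_facts by auto
  qed
  have "0 \<in> insert k {1..<\<eta>}" using assms j a_b_facts by auto
  then show ?thesis using j by auto
qed

lemma R_b: assumes "j \<in> state_b \<eta>" "insert k (state_b \<eta> - {j}) = state_a n \<eta>"
  shows "j = 0 \<and> k = n div 2"
proof -
  have j: "j = 0"
  proof (rule ccontr)
    assume "j \<noteq> 0"
    then have "0 \<in> insert k (state_b \<eta> - {j})" using a_b_facts by auto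
    then show False using assms a_b_facts by auto
  qed
  have "n div 2 \<in> insert k {1..<\<eta>}" using assms j a_b_facts by auto
  then have "k = n div 2" using ev e2 by auto
  then show ?thesis using j by auto
qed

lemma ins_a: "insert 0 (state_a n \<eta> - {n div 2}) = state_b \<eta>"
  using a_b_facts e1 unfolding state_b_def by auto

lemma ins_b: "insert (n div 2) (state_b \<eta> - {0}) = state_a n \<eta>"
  using a_b_facts e1 unfolding state_a_def by auto

lemma D_a:
  assumes p: "p \<ge> 1" and v: "\<And>S. S \<noteq> state_a n \<eta> \<Longrightarrow> S \<noteq> state_b \<eta> \<Longrightarrow> v S = 0"
  shows "nested_comm n p v (state_a n \<eta>) =
    (wt n (state_a n \<eta>) - wt n (state_b \<eta>))^p * (-1)^(\<eta> - 1) * v (state_b \<eta>)"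
proof -
  let ?a = "state_a n \<eta>" and ?b = "state_b \<eta>"
  have "nested_comm n p v ?a = (\<Sum>j<n. \<Sum>k<n. (wt n ?a - wt n (insert k (?a - {j})))^p * cre j (ann k v) ?a)"
    by (rule nested_eq)
  also have "\<dots> = (wt n ?a - wt n (insert 0 (?a - {n div 2})))^p * cre (n div 2) (ann 0 v) ?a"
  proof (rule double_sum_single)
    fix j k assume jk: "j < n" "k < n" "(j, k) \<noteq> (n div 2, 0)"
    show "(wt n ?a - wt n (insert k (?a - {j})))^p * cre j (ann k v) ?a = 0"
    proof (cases "j \<in> ?a \<and> k \<notin> ?a - {j}")
      case True
      have ne: "insert k (?a - {j}) \<noteq> ?b" using R_a True jk by blast
      have c: "cre j (ann k v) ?a = jw_sign ?a j * (jw_sign (?a - {j}) k * v (insert k (?a - {j})))"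
        using True by (simp add: cre_def ann_def)
      show ?thesis
      proof (cases "insert k (?a - {j}) = ?a")
        case True
        then show ?thesis using p by (simp add: c)
      next
        case False
        then show ?thesis using v[OF False ne] by (simp add: c)
      qed
    next
      case False
      then show ?thesis unfolding cre_def ann_def by auto
    qed
  qed (use a_b_facts in simp_all)
  also have "\<dots> = (wt n ?a - wt n ?b)^p * (-1)^(\<eta> - 1) * v ?b"
    using a_b_facts unfolding cre_def ann_def ins_a by (simp add: sign_a sign0)
  finally show ?thesis .
qed

lemma D_b:
  assumes p: "p \<ge> 1" and v: "\<And>S. S \<noteq> state_a n \<eta> \<Longrightarrow> S \<noteq> state_b \<eta> \<Longrightarrow> v S = 0"
  shows "nested_comm n p v (state_b \<eta>) =
    (wt n (state_b \<eta>) - wt n (state_a n \<eta>))^p * (-1)^(\<eta> - 1) * v (state_a n \<eta>)"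
proof -
  let ?a = "state_a n \<eta>" and ?b = "state_b \<eta>"
  have "nested_comm n p v ?b = (\<Sum>j<n. \<Sum>k<n. (wt n ?b - wt n (insert k (?b - {j})))^p * cre j (ann k v) ?b)"
    by (rule nested_eq)
  also have "\<dots> = (wt n ?b - wt n (insert (n div 2) (?b - {0})))^p * cre 0 (ann (n div 2) v) ?b"
  proof (rule double_sum_single)
    fix j k assume jk: "j < n" "k < n" "(j, k) \<noteq> (0, n div 2)"
    show "(wt n ?b - wt n (insert k (?b - {j})))^p * cre j (ann k v) ?b = 0"
    proof (cases "j \<in> ?b \<and> k \<notin> ?b - {j}")
      case True
      have ne: "insert k (?b - {j}) \<noteq> ?a" using R_b True jk by blast
      have c: "cre j (ann k v) ?b = jw_sign ?b j * (jw_sign (?b - {j}) k * v (insert k (?b - {j})))"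
        using True by (simp add: cre_def ann_def)
      show ?thesis
      proof (cases "insert k (?b - {j}) = ?b")
        case True
        then show ?thesis using p by (simp add: c)
      next
        case False
        then show ?thesis using v[OF ne False] by (simp add: c)
      qed
    next
      case False
      then show ?thesis unfolding cre_def ann_def by auto
    qed
  qed (use a_b_facts in simp_all)
  also have "\<dots> = (wt n ?b - wt n ?a)^p * (-1)^(\<eta> - 1) * v ?a"
  proof -
    have em: "\<eta> \<le> n div 2" using e2 by presburger
    have "n div 2 \<notin> ?b - {0}" using a_b_facts em by simp
    then have "cre 0 (ann (n div 2) v) ?b = jw_sign ?b 0 * (jw_sign (?b - {0}) (n div 2) * v ?a)"
      using a_b_facts(3) ins_b unfolding cre_def ann_def by simp
    also have "\<dots> = (-1)^(\<eta> - 1) * v ?a"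
      unfolding a_b_facts(8) sign_b sign0 by simp
    finally show ?thesis unfolding ins_b by simp
  qed
  finally show ?thesis .
qed

end


lemma pow_diff_bound:
  fixes x :: real assumes "x \<ge> 1"
  shows "0 \<le> x^p - (x-1)^p \<and> x^p - (x-1)^p \<le> real p * x^(p-1)"
proof (induction p)
  case 0 then show ?case by simp
next
  case (Suc p)
  have x0: "0 \<le> x - 1" using assms by simp
  have h: "x^Suc p - (x-1)^Suc p = x * (x^p - (x-1)^p) + (x-1)^p"
    by (simp add: algebra_simps)
  have y: "(x-1)^p \<le> x^p" using x0 by (intro power_mono) auto
  have "0 \<le> (x-1)^p" using x0 by simp
  moreover have "x * (x^p - (x-1)^p) \<le> x * (real p * x^(p-1))"
    using Suc.IH assms by (intro mult_left_mono) auto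
  moreover have "x * (real p * x^(p-1)) = real p * x^p"
    using assms by (cases p) auto
  moreover have "0 \<le> x * (x^p - (x-1)^p)" using Suc.IH assms by simp
  moreover have "real (Suc p) * x ^ (Suc p - 1) = real p * x^p + x^p" by (simp add: algebra_simps)
  ultimately show ?case using h y by linarith
qed

lemma sum_two:
  fixes g :: "'a \<Rightarrow> complex"
  assumes "finite A" "a \<in> A" "b \<in> A" "a \<noteq> b" "\<And>S. S \<in> A \<Longrightarrow> S \<noteq> a \<Longrightarrow> S \<noteq> b \<Longrightarrow> g S = 0"
  shows "sum g A = g a + g b"
proof -
  have "sum g A = sum g {a, b}"
    using assms by (intro sum.mono_neutral_right) auto
  then show ?thesis using assms by simp
qed

lemma main_eq:
  fixes n \<eta> p :: nat and v :: fock
  assumes ev: "even n" and e1: "1 \<le> \<eta>" and e2: "2 * \<eta> \<le> n" and p: "p \<ge> 1"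
    and v: "\<And>S. S \<noteq> state_a n \<eta> \<Longrightarrow> S \<noteq> state_b \<eta> \<Longrightarrow> v S = 0"
  shows "inner_fock n v (nested_comm n p v) =
     (-1)^(\<eta> - 1) * (- of_nat (2 * \<eta> - 1))^p *
       (cnj (v (state_a n \<eta>)) * v (state_b \<eta>) + (-1)^p * cnj (v (state_b \<eta>)) * v (state_a n \<eta>))"
proof -
  let ?a = "state_a n \<eta>" and ?b = "state_b \<eta>"
  have d: "wt n ?a - wt n ?b = - of_nat (2 * \<eta> - 1)"
  proof -
    have "int ((\<eta> - 1)^2) - int (\<eta>^2) = - int (2 * \<eta> - 1)"
    proof -
      obtain k where "\<eta> = Suc k" using e1 by (cases \<eta>) auto
      then show ?thesis by (simp add: power2_eq_square algebra_simps)
    qed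
    then have "(of_int (int ((\<eta> - 1)^2) - int (\<eta>^2)) :: complex) = of_int (- int (2 * \<eta> - 1))"
      by simp
    then show ?thesis unfolding wt_a[OF ev e1 e2] wt_b[OF ev e1 e2] by simp
  qed
  have "inner_fock n v (nested_comm n p v) =
      cnj (v ?a) * nested_comm n p v ?a + cnj (v ?b) * nested_comm n p v ?b"
    unfolding inner_fock_def
  proof (rule sum_two)
    show "?a \<in> Pow {..<n}" using a_b_facts(5)[OF ev e1 e2] by simp
    show "?b \<in> Pow {..<n}" using a_b_facts(6)[OF ev e1 e2] by simp
    show "?a \<noteq> ?b" by (rule a_ne_b[OF ev e1 e2])
  qed (simp_all add: v)
  also have "\<dots> = cnj (v ?a) * ((wt n ?a - wt n ?b)^p * (-1)^(\<eta> - 1) * v ?b)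
      + cnj (v ?b) * ((wt n ?b - wt n ?a)^p * (-1)^(\<eta> - 1) * v ?a)"
    using D_a[OF ev e1 e2 p v] D_b[OF ev e1 e2 p v] by simp
  also have "\<dots> = (-1)^(\<eta> - 1) * (wt n ?a - wt n ?b)^p *
       (cnj (v ?a) * v ?b + (-1)^p * cnj (v ?b) * v ?a)"
  proof -
    have "(wt n ?b - wt n ?a)^p = (-1)^p * (wt n ?a - wt n ?b)^p"
      by (metis minus_diff_eq power_minus)
    then show ?thesis by (simp only: ring_distribs mult_ac)
  qed
  finally show ?thesis unfolding d .
qed



lemma sq2: "(complex_of_real (sqrt 2)) * complex_of_real (sqrt 2) = 2"
proof -
  have "(complex_of_real (sqrt 2)) * complex_of_real (sqrt 2) = complex_of_real (sqrt 2 * sqrt 2)"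
    by (simp only: of_real_mult)
  also have "sqrt 2 * sqrt 2 = (2::real)" by simp
  finally show ?thesis by simp
qed

lemma final_bound:
  fixes \<eta> p :: nat assumes "1 \<le> \<eta>"
  shows "\<bar>real (2 * \<eta> - 1) ^ p - 2 ^ p * real \<eta> ^ p\<bar> \<le> real p * 2 ^ p * real \<eta> ^ (p - 1)"
proof -
  define x where "x = 2 * real \<eta>"
  have x1: "x \<ge> 1" using assms unfolding x_def by simp
  have r: "real (2 * \<eta> - 1) = x - 1" using assms unfolding x_def by (simp add: of_nat_diff)
  have e: "2 ^ p * real \<eta> ^ p = x ^ p" unfolding x_def by (simp add: power_mult_distrib)
  have b: "0 \<le> x^p - (x-1)^p \<and> x^p - (x-1)^p \<le> real p * x^(p-1)" by (rule pow_diff_bound[OF x1])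
  have "x^(p-1) = 2^(p-1) * real \<eta>^(p-1)" unfolding x_def by (simp add: power_mult_distrib)
  also have "\<dots> \<le> 2^p * real \<eta>^(p-1)"
    by (intro mult_right_mono power_increasing) auto
  finally have "real p * x^(p-1) \<le> real p * (2^p * real \<eta>^(p-1))"
    by (intro mult_left_mono) auto
  moreover have "\<bar>(x - 1) ^ p - x ^ p\<bar> = x^p - (x-1)^p" using b by linarith
  ultimately show ?thesis using b unfolding r e mult.assoc by linarith
qed

theorem proposition14:
  fixes p :: nat
  assumes "p \<ge> 1"
  shows "\<exists>C::real. \<forall>n \<eta> :: nat. even n \<and> 1 \<le> \<eta> \<and> 2 * \<eta> \<le> n \<longrightarrow>
           \<bar>cmod (inner_fock n (if odd p then psi n \<eta> else phi n \<eta>)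
                      (nested_comm n p (if odd p then psi n \<eta> else phi n \<eta>)))
             - 2 ^ p * real \<eta> ^ p\<bar> \<le> C * real \<eta> ^ (p - 1)"
proof (rule exI[of _ "real p * 2 ^ p"], intro allI impI)
  fix n \<eta> :: nat
  assume h: "even n \<and> 1 \<le> \<eta> \<and> 2 * \<eta> \<le> n"
  then have ev: "even n" and e1: "1 \<le> \<eta>" and e2: "2 * \<eta> \<le> n" by auto
  define v where "v = (if odd p then psi n \<eta> else phi n \<eta>)"
  let ?a = "state_a n \<eta>" and ?b = "state_b \<eta>"
  have ab: "?a \<noteq> ?b" by (rule a_ne_b[OF ev e1 e2])
  define r where "r = complex_of_real (sqrt 2)"
  have rr: "r * r = 2" unfolding r_def by (rule sq2)
  have cr: "cnj r = r" unfolding r_def by simp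
  have r0: "r \<noteq> 0" using rr by auto
  have kaa: "ket ?a ?a = 1" "ket ?b ?a = 0" "ket ?a ?b = 0" "ket ?b ?b = 1"
    using ab unfolding ket_def by auto
  have v0: "\<And>S. S \<noteq> ?a \<Longrightarrow> S \<noteq> ?b \<Longrightarrow> v S = 0"
    unfolding v_def psi_def phi_def ket_def by simp
  define c where "c = cnj (v ?a) * v ?b + (-1)^p * cnj (v ?b) * v ?a"
  have c1: "cmod c = 1"
  proof (cases "odd p")
    case True
    then have va: "v ?a = 1 / r" and vb: "v ?b = \<i> / r"
      unfolding v_def psi_def r_def by (simp_all add: kaa)
    have m1: "(-1::complex)^p = -1" using True by simp
    have "c = (1 / r) * (\<i> / r) + (\<i> / r) * (1 / r)"
      unfolding c_def va vb m1 by (simp add: cr)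
    also have "\<dots> = \<i> * (2 / (r * r))" by (simp add: field_simps)
    also have "\<dots> = \<i>" by (simp add: rr)
    finally show ?thesis by simp
  next
    case False
    then have va: "v ?a = 1 / r" and vb: "v ?b = 1 / r"
      unfolding v_def phi_def r_def by (simp_all add: kaa)
    have m1: "(-1::complex)^p = 1" using False by simp
    have "c = (1 / r) * (1 / r) + (1 / r) * (1 / r)"
      unfolding c_def va vb m1 by (simp add: cr)
    also have "\<dots> = 2 / (r * r)" by (simp add: field_simps)
    also have "\<dots> = 1" by (simp add: rr)
    finally show ?thesis by simp
  qed
  have "inner_fock n v (nested_comm n p v) = (-1)^(\<eta> - 1) * (- of_nat (2 * \<eta> - 1))^p * c"
    unfolding c_def by (rule main_eq[OF ev e1 e2 assms v0])
  then have "cmod (inner_fock n v (nested_comm n p v)) = real (2 * \<eta> - 1) ^ p"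
    using c1 by (simp only: norm_mult norm_power norm_minus_cancel norm_one norm_of_nat mult_1_right mult_1_left power_one)
  then have "\<bar>cmod (inner_fock n v (nested_comm n p v)) - 2 ^ p * real \<eta> ^ p\<bar>
     \<le> real p * 2 ^ p * real \<eta> ^ (p - 1)"
    using final_bound[OF e1, of p] by (simp only:)
  then show "\<bar>cmod (inner_fock n (if odd p then psi n \<eta> else phi n \<eta>)
                      (nested_comm n p (if odd p then psi n \<eta> else phi n \<eta>)))
             - 2 ^ p * real \<eta> ^ p\<bar> \<le> real p * 2 ^ p * real \<eta> ^ (p - 1)"
    unfolding v_def .
qed


end
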